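(* Let $Q\ge1$ be an integer, let $h$ be a conditionally negative definite kernel on $\mathcal{X}=\mathbb{R}^N$ and let $\alpha\in(\mathbb{R}_+)^Q$ be fixed. Let $\eta$ be a signed measure of finite total variation on $\mathcal{X}$ belonging to $\mathcal{M}\mathcal{A}^h$. Suppose that $h$ is continuous on $\mathcal{X}\times\mathcal{X}$ and that $h$ is measure coercive. Then the minimization problem $\inf_{X=(x_q)_{q=1}^Q\in\mathcal{X}^Q} d(\delta_{\alpha,X},\eta)^2$ admits at least one solution $X^\star\in\mathcal{X}^Q$.
   Context: $h:\mathcal{X}\times\mathcal{X}\to\mathbb{R}$ is symmetric, $h(x,x)=0$, and conditionally negative definite: $\sum_{j_1,j_2}\alpha_{j_1}\alpha_{j_2}h(x_{j_1},x_{j_2})\le0$ whenever $\sum_j\alpha_j=0$. Put $k(x,y)=\frac{h(x,0)+h(y,0)-h(x,y)}{2}$, a positive definite kernel; $\mathcal{M}\mathcal{A}^h$ is the reproducing kernel Hilbert space of $k$, and a measure $\eta$ is said to belong to it when $\int\sqrt{k(x,x)}|\eta|(dx)<\infty$ so that its embedding $\int k(x,\cdot)\eta(dx)$ lies in this space. The distance is $d(\mu,\nu)^2=\int\int k(x,y)(\mu-\nu)(dx)(\mu-\nu)(dy)$, which is the RKHS norm of the difference of the embeddings; in particular $d(\delta_x,\delta_y)^2=h(x,y)$. For $X=(x_q)\in\mathcal{X}^Q$, $\delta_{\alpha,X}=\sum_q\alpha_q\delta_{x_q}$. With $\mathcal{P}_J=\{\beta\in\mathbb{R}^J:\beta_j\ge0,\sum\beta_j=1\}$,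 $h$ is measure coercive if for every $J\ge1$ and $\beta\in\mathcal{P}_J$, $\lim_{\|X\|\to\infty}d(\delta_{\beta,X},\delta_0)=\infty$ for $X\in\mathcal{X}^J$. *)

theory Defs
  imports "HOL-Analysis.Analysis"
begin

definition cnd_kernel :: "('a \<Rightarrow> 'a \<Rightarrow> real) \<Rightarrow> bool" where
  "cnd_kernel h \<longleftrightarrow>
     (\<forall>x y. h x y = h y x) \<and> (\<forall>x. h x x = 0) \<and>
     (\<forall>(J::nat) (a::nat \<Rightarrow> real) (xs::nat \<Rightarrow> 'a).
        (\<Sum>j<J. a j) = 0 \<longrightarrow> (\<Sum>j1<J. \<Sum>j2<J. a j1 * a j2 * h (xs j1) (xs j2)) \<le> 0)"

definition kernel_k :: "('a::zero \<Rightarrow> 'a \<Rightarrow> real) \<Rightarrow> 'a \<Rightarrow> 'a \<Rightarrow> real" where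
  "kernel_k h x y = (h x 0 + h y 0 - h x y) / 2"

text \<open>A finite signed measure is represented by a pair (P, N) of finite Borel measures,
  standing for P - N. Its integration functional:\<close>
definition signed_int :: "'a measure \<times> 'a measure \<Rightarrow> ('a \<Rightarrow> real) \<Rightarrow> real" where
  "signed_int \<eta> f = integral\<^sup>L (fst \<eta>) f - integral\<^sup>L (snd \<eta>) f"

definition finite_signed_borel :: "('a::topological_space) measure \<times> 'a measure \<Rightarrow> bool" where
  "finite_signed_borel \<eta> \<longleftrightarrow>
     sets (fst \<eta>) = sets borel \<and> sets (snd \<eta>) = sets borel \<and>
     finite_measure (fst \<eta>) \<and> finite_measure (snd \<eta>)"

text \<open>Membership in MA^h: integral of sqrt(k(x,x)) against |eta| is finite
  (checked against both parts P and N of the representation).\<close>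
definition in_MA :: "('a::{zero,topological_space} \<Rightarrow> 'a \<Rightarrow> real) \<Rightarrow> 'a measure \<times> 'a measure \<Rightarrow> bool" where
  "in_MA h \<eta> \<longleftrightarrow>
     (\<integral>\<^sup>+ x. ennreal (sqrt (kernel_k h x x)) \<partial>(fst \<eta>)) < \<infinity> \<and>
     (\<integral>\<^sup>+ x. ennreal (sqrt (kernel_k h x x)) \<partial>(snd \<eta>)) < \<infinity>"

text \<open>Integration against delta_{alpha,X} = sum_{q<Q} alpha_q delta_{x_q}.\<close>
definition dirac_int :: "nat \<Rightarrow> (nat \<Rightarrow> real) \<Rightarrow> (nat \<Rightarrow> 'a) \<Rightarrow> ('a \<Rightarrow> real) \<Rightarrow> real" where
  "dirac_int Q \<alpha> X f = (\<Sum>q<Q. \<alpha> q * f (X q))"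

text \<open>Squared kernel distance: double integral of k against (mu - nu) x (mu - nu),
  where I is the integration functional of the signed measure mu - nu.\<close>
definition kdist2 :: "('a \<Rightarrow> 'a \<Rightarrow> real) \<Rightarrow> (('a \<Rightarrow> real) \<Rightarrow> real) \<Rightarrow> real" where
  "kdist2 k I = I (\<lambda>x. I (\<lambda>y. k x y))"

definition obj :: "('a::zero \<Rightarrow> 'a \<Rightarrow> real) \<Rightarrow> nat \<Rightarrow> (nat \<Rightarrow> real) \<Rightarrow> 'a measure \<times> 'a measure
                   \<Rightarrow> (nat \<Rightarrow> 'a) \<Rightarrow> real" where
  "obj h Q \<alpha> \<eta> X = kdist2 (kernel_k h) (\<lambda>f. dirac_int Q \<alpha> X f - signed_int \<eta> f)"

definition measure_coercive :: "('a::real_normed_vector \<Rightarrow> 'a \<Rightarrow> real) \<Rightarrow> bool" where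
  "measure_coercive h \<longleftrightarrow>
     (\<forall>(J::nat) (\<beta>::nat \<Rightarrow> real). J \<ge> 1 \<and> (\<forall>j<J. \<beta> j > 0) \<and> (\<Sum>j<J. \<beta> j) = 1 \<longrightarrow>
        (\<forall>M::real. \<exists>R::real. \<forall>X::nat \<Rightarrow> 'a. (\<exists>j<J. norm (X j) \<ge> R) \<longrightarrow>
            sqrt (kdist2 (kernel_k h) (\<lambda>f. dirac_int J \<beta> X f - f 0)) \<ge> M))"

end

theory Submission
  imports Defs "HOL-Analysis.Analysis"
begin


lemma cnd_sym: "cnd_kernel h \<Longrightarrow> h x y = h y x" unfolding cnd_kernel_def by blast
lemma cnd_diag: "cnd_kernel h \<Longrightarrow> h x x = 0" unfolding cnd_kernel_def by blast
lemma cnd_sum: fixes J :: nat and a :: "nat \<Rightarrow> real" and xs :: "nat \<Rightarrow> 'a" shows "cnd_kernel h \<Longrightarrow> (\<Sum>j<J. a j) = 0 \<Longrightarrow> (\<Sum>j1<J. \<Sum>j2<J. a j1 * a j2 * h (xs j1) (xs j2)) \<le> 0"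
  unfolding cnd_kernel_def by (elim conjE allE impE) auto

lemma k_sym: "cnd_kernel h \<Longrightarrow> kernel_k h x y = kernel_k h y x"
  unfolding kernel_k_def using cnd_sym[of h x y] by simp

lemma k_zero1: "cnd_kernel h \<Longrightarrow> kernel_k h x 0 = 0"
  unfolding kernel_k_def using cnd_diag[of h 0] cnd_sym[of h 0 x] by simp
lemma k_zero2: "cnd_kernel h \<Longrightarrow> kernel_k h 0 y = 0"
  unfolding kernel_k_def using cnd_diag[of h 0] cnd_sym[of h 0 y] by simp

lemma k_pd:
  fixes h :: "'a::zero \<Rightarrow> 'a \<Rightarrow> real" and J :: nat
  assumes h: "cnd_kernel h"
  shows "0 \<le> (\<Sum>i<J. \<Sum>j<J. a i * a j * kernel_k h (x i) (x j))"
proof -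
  define \<sigma> where "\<sigma> = (\<Sum>j<J. a j)"
  define H where "H = (\<Sum>i<J. a i * h (x i) 0)"
  define D where "D = (\<Sum>i<J. \<Sum>j<J. a i * a j * h (x i) (x j))"
  define a' where "a' j = (if j < J then a j else - \<sigma>)" for j
  define x' where "x' j = (if j < J then x j else 0)" for j
  have s0: "(\<Sum>j<Suc J. a' j) = 0" by (simp add: a'_def \<sigma>_def)
  have c: "(\<Sum>i<Suc J. \<Sum>j<Suc J. a' i * a' j * h (x' i) (x' j)) \<le> 0"
    using cnd_sum[OF h s0] .
  have t1: "(\<Sum>i<J. a i * \<sigma> * h (x i) 0) = \<sigma> * H"
    unfolding H_def sum_distrib_left by (rule sum.cong) auto
  have t2: "(\<Sum>j<J. - \<sigma> * a j * h 0 (x j)) = - \<sigma> * H"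
    unfolding H_def sum_distrib_left by (rule sum.cong) (auto simp: cnd_sym[OF h, of 0])
  have "(\<Sum>i<Suc J. \<Sum>j<Suc J. a' i * a' j * h (x' i) (x' j))
      = (\<Sum>i<J. (\<Sum>j<J. a i * a j * h (x i) (x j)) - a i * \<sigma> * h (x i) 0)
        + ((\<Sum>j<J. - \<sigma> * a j * h 0 (x j)) + \<sigma> * \<sigma> * h 0 0)"
    by (simp add: a'_def x'_def)
  also have "\<dots> = D - \<sigma> * H - \<sigma> * H"
    unfolding t2 sum_subtractf t1 D_def using cnd_diag[OF h, of 0] by simp
  finally have e1: "(\<Sum>i<Suc J. \<Sum>j<Suc J. a' i * a' j * h (x' i) (x' j)) = D - 2 * \<sigma> * H" by simp
  have t3: "(\<Sum>i<J. \<Sum>j<J. a i * a j * h (x i) 0) = H * \<sigma>"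
    unfolding H_def \<sigma>_def sum_product by (intro sum.cong) (auto simp: mult_ac)
  have t4: "(\<Sum>i<J. \<Sum>j<J. a i * a j * h (x j) 0) = \<sigma> * H"
    unfolding H_def \<sigma>_def sum_product by (intro sum.cong) (auto simp: mult_ac)
  have "(\<Sum>i<J. \<Sum>j<J. a i * a j * kernel_k h (x i) (x j))
     = (\<Sum>i<J. \<Sum>j<J. (a i * a j * h (x i) 0 + a i * a j * h (x j) 0 - a i * a j * h (x i) (x j)) / 2)"
    unfolding kernel_k_def by (intro sum.cong) (auto simp: algebra_simps)
  also have "\<dots> = (H * \<sigma> + \<sigma> * H - D) / 2"
    unfolding sum_divide_distrib[symmetric] sum_subtractf sum.distrib t3 t4 D_def ..
  finally have "(\<Sum>i<J. \<Sum>j<J. a i * a j * kernel_k h (x i) (x j)) = (H * \<sigma> + \<sigma> * H - D) / 2" .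
  moreover have "D \<le> 2 * \<sigma> * H" using c e1 by simp
  ultimately show ?thesis by (simp add: algebra_simps)
qed

lemma disc:
  fixes a b c :: real
  assumes a: "a \<ge> 0" and c: "c \<ge> 0" and t: "\<And>t. 0 \<le> t^2 * a - 2 * t * b + c"
  shows "\<bar>b\<bar> \<le> sqrt a * sqrt c"
proof (cases "a = 0")
  case True
  have "b = 0"
  proof (rule ccontr)
    assume "b \<noteq> 0"
    have "0 \<le> ((c+1)/(2*b))^2 * a - 2 * ((c+1)/(2*b)) * b + c" by (rule t)
    with True \<open>b \<noteq> 0\<close> show False by simp
  qed
  then show ?thesis using a c by simp
next
  case False
  then have ap: "a > 0" using a by simp
  have "0 \<le> (b/a)^2 * a - 2 * (b/a) * b + c" by (rule t)
  also have "(b/a)^2 * a - 2 * (b/a) * b + c = c - b^2 / a" using ap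
    by (simp add: field_simps power2_eq_square)
  finally have "b^2 \<le> a * c" using ap by (simp add: field_simps)
  then have "sqrt (b^2) \<le> sqrt (a * c)" by (rule real_sqrt_le_mono)
  then show ?thesis by (simp add: real_sqrt_mult)
qed

lemma k_diag_nonneg:
  fixes h :: "'a::zero \<Rightarrow> 'a \<Rightarrow> real"
  assumes h: "cnd_kernel h"
  shows "0 \<le> kernel_k h y y"
  using k_pd[OF h, where J=1 and a="\<lambda>_. 1" and x="\<lambda>_. y"] by simp

lemma k_cs:
  fixes h :: "'a::zero \<Rightarrow> 'a \<Rightarrow> real" and Q :: nat
  assumes h: "cnd_kernel h"
  shows "\<bar>\<Sum>q<Q. \<alpha> q * kernel_k h (X q) y\<bar>
     \<le> sqrt (\<Sum>q<Q. \<Sum>r<Q. \<alpha> q * \<alpha> r * kernel_k h (X q) (X r)) * sqrt (kernel_k h y y)"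
proof (rule disc)
  define A where "A = (\<Sum>q<Q. \<Sum>r<Q. \<alpha> q * \<alpha> r * kernel_k h (X q) (X r))"
  define u where "u = (\<Sum>q<Q. \<alpha> q * kernel_k h (X q) y)"
  show "0 \<le> (\<Sum>q<Q. \<Sum>r<Q. \<alpha> q * \<alpha> r * kernel_k h (X q) (X r))" by (rule k_pd[OF h])
  show "0 \<le> kernel_k h y y" by (rule k_diag_nonneg[OF h])
  fix t :: real
  define a where "a j = (if j < Q then t * \<alpha> j else -1)" for j
  define x where "x j = (if j < Q then X j else y)" for j
  have p: "0 \<le> (\<Sum>i<Suc Q. \<Sum>j<Suc Q. a i * a j * kernel_k h (x i) (x j))" by (rule k_pd[OF h])
  have s1: "(\<Sum>i<Q. \<Sum>j<Q. a i * a j * kernel_k h (x i) (x j)) = t^2 * A"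
    unfolding A_def sum_distrib_left by (intro sum.cong) (auto simp: a_def x_def power2_eq_square mult_ac)
  have s2: "(\<Sum>i<Q. a i * a Q * kernel_k h (x i) (x Q)) = - t * u"
    unfolding u_def sum_distrib_left by (intro sum.cong) (auto simp: a_def x_def mult_ac)
  have s3: "(\<Sum>j<Q. a Q * a j * kernel_k h (x Q) (x j)) = - t * u"
    unfolding u_def sum_distrib_left by (intro sum.cong) (auto simp: a_def x_def mult_ac k_sym[OF h, of y])
  have "(\<Sum>i<Suc Q. \<Sum>j<Suc Q. a i * a j * kernel_k h (x i) (x j))
     = (\<Sum>i<Q. \<Sum>j<Q. a i * a j * kernel_k h (x i) (x j)) + (\<Sum>i<Q. a i * a Q * kernel_k h (x i) (x Q))
       + ((\<Sum>j<Q. a Q * a j * kernel_k h (x Q) (x j)) + a Q * a Q * kernel_k h (x Q) (x Q))"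
    by (simp add: sum.distrib)
  also have "\<dots> = t^2 * A - 2 * t * u + kernel_k h y y"
    unfolding s1 s2 s3 by (simp add: a_def x_def)
  finally show "0 \<le> t^2 * (\<Sum>q<Q. \<Sum>r<Q. \<alpha> q * \<alpha> r * kernel_k h (X q) (X r))
      - 2 * t * (\<Sum>q<Q. \<alpha> q * kernel_k h (X q) y) + kernel_k h y y"
    using p unfolding A_def u_def by simp
qed

lemma k_cs1:
  fixes h :: "'a::zero \<Rightarrow> 'a \<Rightarrow> real"
  assumes h: "cnd_kernel h"
  shows "\<bar>kernel_k h x y\<bar> \<le> sqrt (kernel_k h x x) * sqrt (kernel_k h y y)"
  using k_cs[OF h, where Q=1 and \<alpha>="\<lambda>_. 1" and X="\<lambda>_. x" and y=y] by simp




lemma h_comp: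
  fixes h :: "'a::topological_space \<Rightarrow> 'a \<Rightarrow> real" and f g :: "'b::topological_space \<Rightarrow> 'a"
  assumes hc: "continuous_on UNIV (\<lambda>(x, y). h x y)" and f: "continuous_on S f" and g: "continuous_on S g"
  shows "continuous_on S (\<lambda>z. h (f z) (g z))"
  using continuous_on_compose2[OF hc continuous_on_Pair[OF f g]] by auto

lemma k_comp:
  fixes h :: "'a::{topological_space,zero} \<Rightarrow> 'a \<Rightarrow> real" and f g :: "'b::topological_space \<Rightarrow> 'a"
  assumes hc: "continuous_on UNIV (\<lambda>(x, y). h x y)" and f: "continuous_on S f" and g: "continuous_on S g"
  shows "continuous_on S (\<lambda>z. kernel_k h (f z) (g z))"
  unfolding kernel_k_def
  by (intro continuous_intros h_comp[OF hc] f g) auto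

lemma int_bound:
  fixes f w :: "'a::euclidean_space \<Rightarrow> real"
  assumes w: "integrable M w" and f: "f \<in> borel_measurable M" and K: "K \<ge> 0"
    and b: "\<And>y. \<bar>f y\<bar> \<le> K * w y"
  shows "integrable M f" "\<bar>integral\<^sup>L M f\<bar> \<le> K * integral\<^sup>L M w"
proof -
  have wK: "integrable M (\<lambda>y. K * w y)" using w by simp
  show fi: "integrable M f"
    by (rule Bochner_Integration.integrable_bound[OF wK f]) (auto intro!: AE_I2 order_trans[OF b])
  have "\<bar>integral\<^sup>L M f\<bar> \<le> (\<integral>y. K * w y \<partial>M)"
    by (rule integral_abs_bound_integral[OF fi wK]) (rule b)
  then show "\<bar>integral\<^sup>L M f\<bar> \<le> K * integral\<^sup>L M w" by simp
qed

locale setting =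
  fixes h :: "real^'n \<Rightarrow> real^'n \<Rightarrow> real" and P :: "(real^'n) measure"
  assumes cnd: "cnd_kernel h" and hc: "continuous_on UNIV (\<lambda>(x, y). h x y)"
    and sP: "sets P = sets borel"
    and wP: "(\<integral>\<^sup>+ x. ennreal (sqrt (kernel_k h x x)) \<partial>P) < \<infinity>"
begin

abbreviation "k \<equiv> kernel_k h"
definition "w y = sqrt (k y y)"
definition "G x = (\<integral>y. k x y \<partial>P)"

lemma meas: "continuous_on UNIV f \<Longrightarrow> f \<in> borel_measurable P"
  using borel_measurable_continuous_onI measurable_cong_sets[OF sP refl] by blast

lemma w_cont: "continuous_on UNIV w"
  unfolding w_def by (intro continuous_intros k_comp[OF hc])

lemma w_int: "integrable P w"
proof (rule integrableI_bounded)
  show "w \<in> borel_measurable P" by (rule meas[OF w_cont])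
  have "(\<integral>\<^sup>+ x. ennreal (norm (w x)) \<partial>P) = (\<integral>\<^sup>+ x. ennreal (sqrt (kernel_k h x x)) \<partial>P)"
    by (simp add: w_def k_diag_nonneg[OF cnd])
  then show "(\<integral>\<^sup>+ x. ennreal (norm (w x)) \<partial>P) < \<infinity>" using wP by simp
qed

lemma w_nonneg: "0 \<le> w y" by (simp add: w_def k_diag_nonneg[OF cnd])

lemma k_bound: "\<bar>k x y\<bar> \<le> w x * w y"
  unfolding w_def by (rule k_cs1[OF cnd])

lemma kx_cont: "continuous_on UNIV (\<lambda>y. k x y)"
  by (intro k_comp[OF hc] continuous_intros)

lemma ky_cont: "continuous_on UNIV (\<lambda>x. k x y)"
  by (intro k_comp[OF hc] continuous_intros)

lemma kx_int: "integrable P (\<lambda>y. k x y)" and G_bound: "\<bar>G x\<bar> \<le> w x * integral\<^sup>L P w"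
  using int_bound[OF w_int meas[OF kx_cont] w_nonneg k_bound] unfolding G_def by auto

lemma G_cont: "continuous_on UNIV G"
proof (rule continuous_at_imp_continuous_on, intro ballI)
  fix x :: "real^'n"
  show "isCont G x"
  proof (rule continuous_at_sequentiallyI)
    fix u assume u: "u \<longlonglongrightarrow> x"
    have "(\<lambda>n. w (u n)) \<longlonglongrightarrow> w x"
      using w_cont by (intro isCont_tendsto_compose[OF _ u]) (simp add: continuous_on_eq_continuous_at)
    then have "Bseq (\<lambda>n. w (u n))" using convergent_imp_Bseq convergentI by blast
    then obtain K where K: "K > 0" "\<And>n. norm (w (u n)) \<le> K" unfolding Bseq_def by blast
    show "(\<lambda>n. G (u n)) \<longlonglongrightarrow> G x"
      unfolding G_def
    proof (rule integral_dominated_convergence[where w="\<lambda>y. K * w y"])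
      show "(\<lambda>y. k x y) \<in> borel_measurable P" by (rule meas[OF kx_cont])
      show "(\<lambda>y. k (u n) y) \<in> borel_measurable P" for n by (rule meas[OF kx_cont])
      show "integrable P (\<lambda>y. K * w y)" using w_int by simp
      show "AE y in P. (\<lambda>n. k (u n) y) \<longlonglongrightarrow> k x y"
      proof (rule AE_I2)
        fix y
        have "isCont (\<lambda>x. k x y) x" using ky_cont[of y] by (simp add: continuous_on_eq_continuous_at)
        then show "(\<lambda>n. k (u n) y) \<longlonglongrightarrow> k x y"
          by (rule isCont_tendsto_compose[OF _ u])
      qed
      show "AE y in P. norm (k (u n) y) \<le> K * w y" for n
      proof (rule AE_I2)
        fix y
        have "\<bar>k (u n) y\<bar> \<le> w (u n) * w y" by (rule k_bound)
        also have "\<dots> \<le> K * w y" using K(2)[of n] w_nonneg[of y] w_nonneg[of "u n"]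
          by (intro mult_right_mono) auto
        finally show "norm (k (u n) y) \<le> K * w y" by simp
      qed
    qed
  qed
qed

end




locale setting2 = p: setting h P + n: setting h N
  for h :: "real^'n \<Rightarrow> real^'n \<Rightarrow> real" and P N
begin

definition "g x = p.G x - n.G x"
definition "CC = integral\<^sup>L P p.w + integral\<^sup>L N p.w"
definition "AA \<alpha> (Q::nat) X = (\<Sum>q<Q. \<Sum>r<Q. \<alpha> q * \<alpha> r * kernel_k h (X q) (X r))"
definition "BB \<alpha> (Q::nat) X = (\<Sum>q<Q. \<alpha> q * g (X q))"

lemma ww: "n.w = p.w" unfolding p.w_def n.w_def ..

lemma CC_nonneg: "0 \<le> CC"
  unfolding CC_def using p.w_nonneg n.w_nonneg ww by (simp add: integral_nonneg_AE add_nonneg_nonneg)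

lemma g_cont: "continuous_on UNIV g"
  unfolding g_def by (intro continuous_intros p.G_cont n.G_cont)

lemma g_bound: "\<bar>g x\<bar> \<le> CC * p.w x"
proof -
  have "\<bar>g x\<bar> \<le> \<bar>p.G x\<bar> + \<bar>n.G x\<bar>" unfolding g_def by simp
  also have "\<dots> \<le> p.w x * integral\<^sup>L P p.w + p.w x * integral\<^sup>L N p.w"
    using p.G_bound[of x] n.G_bound[of x] ww by simp
  finally show ?thesis unfolding CC_def by (simp add: algebra_simps)
qed

lemma g_intP: "integrable P g"
  by (rule int_bound(1)[OF p.w_int p.meas[OF g_cont] CC_nonneg g_bound])
lemma g_intN: "integrable N g"
  using int_bound(1)[OF n.w_int n.meas[OF g_cont] CC_nonneg] g_bound ww by simp

lemma ksym_int: "integrable P (\<lambda>x. kernel_k h x y)" "integrable N (\<lambda>x. kernel_k h x y)"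
  "(\<integral>x. kernel_k h x y \<partial>P) = p.G y" "(\<integral>x. kernel_k h x y \<partial>N) = n.G y"
  using p.kx_int[of y] n.kx_int[of y] k_sym[OF p.cnd, of _ y]
  by (simp_all add: p.G_def n.G_def)

lemma intF:
  fixes M :: "(real^'n) measure"
  assumes i1: "\<And>y. integrable M (\<lambda>x. kernel_k h x y)" and i2: "integrable M g"
  shows "(\<integral>x. (\<Sum>r<Q. \<alpha> r * kernel_k h x (X r)) - g x \<partial>M)
     = (\<Sum>r<Q. \<alpha> r * (\<integral>x. kernel_k h x (X r) \<partial>M)) - integral\<^sup>L M g"
proof -
  have "(\<integral>x. (\<Sum>r<Q. \<alpha> r * kernel_k h x (X r)) - g x \<partial>M)
      = (\<integral>x. (\<Sum>r<Q. \<alpha> r * kernel_k h x (X r)) \<partial>M) - integral\<^sup>L M g"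
  proof -
    have iS: "integrable M (\<lambda>x. \<Sum>r<Q. \<alpha> r * kernel_k h x (X r))"
      by (rule Bochner_Integration.integrable_sum) (simp add: i1)
    show ?thesis by (rule Bochner_Integration.integral_diff[OF iS i2])
  qed
  also have "(\<integral>x. (\<Sum>r<Q. \<alpha> r * kernel_k h x (X r)) \<partial>M) = (\<Sum>r<Q. \<alpha> r * (\<integral>x. kernel_k h x (X r) \<partial>M))"
    using i1 by (subst Bochner_Integration.integral_sum) auto
  finally show ?thesis .
qed

lemma obj_formula:
  "obj h Q \<alpha> (P, N) X = AA \<alpha> Q X - 2 * BB \<alpha> Q X + (integral\<^sup>L P g - integral\<^sup>L N g)"
proof -
  have inner: "(\<lambda>x. dirac_int Q \<alpha> X (kernel_k h x) - signed_int (P, N) (kernel_k h x))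
     = (\<lambda>x. (\<Sum>r<Q. \<alpha> r * kernel_k h x (X r)) - g x)"
    by (simp add: dirac_int_def signed_int_def g_def p.G_def n.G_def)
  have e1: "(\<integral>x. (\<Sum>r<Q. \<alpha> r * kernel_k h x (X r)) - g x \<partial>P)
     = (\<Sum>r<Q. \<alpha> r * p.G (X r)) - integral\<^sup>L P g"
    using intF[OF ksym_int(1) g_intP] ksym_int(3) by simp
  have e2: "(\<integral>x. (\<Sum>r<Q. \<alpha> r * kernel_k h x (X r)) - g x \<partial>N)
     = (\<Sum>r<Q. \<alpha> r * n.G (X r)) - integral\<^sup>L N g"
    using intF[OF ksym_int(2) g_intN] ksym_int(4) by simp
  have e3: "(\<Sum>r<Q. \<alpha> r * p.G (X r)) - (\<Sum>r<Q. \<alpha> r * n.G (X r)) = BB \<alpha> Q X"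
    unfolding BB_def g_def sum_subtractf[symmetric] by (simp add: algebra_simps)
  have e4: "(\<Sum>q<Q. \<alpha> q * ((\<Sum>r<Q. \<alpha> r * kernel_k h (X q) (X r)) - g (X q))) = AA \<alpha> Q X - BB \<alpha> Q X"
    unfolding AA_def BB_def by (simp add: right_diff_distrib sum_subtractf sum_distrib_left mult.assoc)
  have "obj h Q \<alpha> (P, N) X = (\<Sum>q<Q. \<alpha> q * ((\<Sum>r<Q. \<alpha> r * kernel_k h (X q) (X r)) - g (X q)))
     - ((\<integral>x. (\<Sum>r<Q. \<alpha> r * kernel_k h x (X r)) - g x \<partial>P) - (\<integral>x. (\<Sum>r<Q. \<alpha> r * kernel_k h x (X r)) - g x \<partial>N))"
    unfolding obj_def kdist2_def inner by (simp add: dirac_int_def signed_int_def)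
  also have "\<dots> = AA \<alpha> Q X - 2 * BB \<alpha> Q X + (integral\<^sup>L P g - integral\<^sup>L N g)"
    unfolding e1 e2 e4 using e3 by simp
  finally show ?thesis .
qed

end


context setting2 begin
lemma BB_bound: "\<bar>BB \<alpha> Q X\<bar> \<le> sqrt (AA \<alpha> Q X) * CC"
proof -
  define u where "u y = (\<Sum>q<Q. \<alpha> q * kernel_k h (X q) y)" for y
  have ub: "\<bar>u y\<bar> \<le> sqrt (AA \<alpha> Q X) * p.w y" for y
    unfolding u_def AA_def p.w_def using k_cs[OF p.cnd] by blast
  have uc: "continuous_on UNIV u" unfolding u_def
    by (intro continuous_on_sum continuous_on_mult continuous_on_const p.kx_cont)
  have sq: "0 \<le> sqrt (AA \<alpha> Q X)" unfolding AA_def using k_pd[OF p.cnd] by simp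
  have wN: "integrable N p.w" using n.w_int ww by simp
  have bP: "\<bar>integral\<^sup>L P u\<bar> \<le> sqrt (AA \<alpha> Q X) * integral\<^sup>L P p.w"
    by (rule int_bound(2)[where f=u, OF p.w_int p.meas[OF uc] sq ub])
  have bN: "\<bar>integral\<^sup>L N u\<bar> \<le> sqrt (AA \<alpha> Q X) * integral\<^sup>L N p.w"
    by (rule int_bound(2)[where f=u, OF wN n.meas[OF uc] sq ub])
  have "BB \<alpha> Q X = integral\<^sup>L P u - integral\<^sup>L N u"
  proof -
    have "integral\<^sup>L P u = (\<Sum>q<Q. \<alpha> q * p.G (X q))"
      unfolding u_def p.G_def using p.kx_int by (subst Bochner_Integration.integral_sum) auto
    moreover have "integral\<^sup>L N u = (\<Sum>q<Q. \<alpha> q * n.G (X q))"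
      unfolding u_def n.G_def using n.kx_int by (subst Bochner_Integration.integral_sum) auto
    ultimately show ?thesis unfolding BB_def g_def by (simp add: right_diff_distrib sum_subtractf)
  qed
  then have "\<bar>BB \<alpha> Q X\<bar> \<le> \<bar>integral\<^sup>L P u\<bar> + \<bar>integral\<^sup>L N u\<bar>" by simp
  also have "\<dots> \<le> sqrt (AA \<alpha> Q X) * integral\<^sup>L P p.w + sqrt (AA \<alpha> Q X) * integral\<^sup>L N p.w"
    using bP bN by simp
  finally show ?thesis unfolding CC_def by (simp add: algebra_simps)
qed

end



lemma reindex:
  fixes e :: "nat \<Rightarrow> nat" and \<phi> :: "nat \<Rightarrow> real"
  assumes e: "bij_betw e {0..<card S} S" and S: "S \<subseteq> {..<Q}" and z: "\<And>q. q < Q \<Longrightarrow> q \<notin> S \<Longrightarrow> \<phi> q = 0"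
  shows "(\<Sum>j<card S. \<phi> (e j)) = (\<Sum>q<Q. \<phi> q)"
proof -
  have "(\<Sum>j<card S. \<phi> (e j)) = (\<Sum>q\<in>S. \<phi> q)"
    using sum.reindex_bij_betw[OF e, of \<phi>] by (simp add: lessThan_atLeast0)
  also have "\<dots> = (\<Sum>q<Q. \<phi> q)" by (rule sum.mono_neutral_left) (use S z in auto)
  finally show ?thesis .
qed

lemma kd:
  fixes h :: "'a::zero \<Rightarrow> 'a \<Rightarrow> real" and s :: real
  assumes h: "cnd_kernel h" and s: "s \<noteq> 0"
  shows "kdist2 (kernel_k h) (\<lambda>f. dirac_int Q \<alpha> X f / s - f 0)
       = (\<Sum>q<Q. \<Sum>r<Q. \<alpha> q * \<alpha> r * kernel_k h (X q) (X r)) / s^2"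
proof -
  have "kdist2 (kernel_k h) (\<lambda>f. dirac_int Q \<alpha> X f / s - f 0)
     = (\<Sum>q<Q. \<alpha> q * ((\<Sum>r<Q. \<alpha> r * kernel_k h (X q) (X r)) / s)) / s"
    unfolding kdist2_def dirac_int_def by (simp add: k_zero1[OF h] k_zero2[OF h])
  also have "\<dots> = (\<Sum>q<Q. \<Sum>r<Q. \<alpha> q * \<alpha> r * kernel_k h (X q) (X r)) / s^2"
    by (simp add: sum_distrib_left sum_divide_distrib power2_eq_square mult.assoc)
  finally show ?thesis .
qed

theorem proposition1:
  fixes h :: "real^'n \<Rightarrow> real^'n \<Rightarrow> real"
    and Q :: nat and \<alpha> :: "nat \<Rightarrow> real"
    and \<eta> :: "(real^'n) measure \<times> (real^'n) measure"
  assumes "Q \<ge> 1"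
    and "cnd_kernel h"
    and "\<forall>q<Q. \<alpha> q \<ge> 0"
    and "finite_signed_borel \<eta>"
    and "in_MA h \<eta>"
    and "continuous_on UNIV (\<lambda>(x, y). h x y)"
    and "measure_coercive h"
  shows "\<exists>X::nat \<Rightarrow> real^'n. \<forall>Y::nat \<Rightarrow> real^'n. obj h Q \<alpha> \<eta> X \<le> obj h Q \<alpha> \<eta> Y"
proof -
  note cnd = assms(2) and apos = assms(3) and hc = assms(6) and mc = assms(7)
  have sp: "setting h (fst \<eta>)" "setting h (snd \<eta>)"
    using assms(4,5) cnd hc unfolding setting_def finite_signed_borel_def in_MA_def by auto
  interpret S2: setting2 h "fst \<eta>" "snd \<eta>" using sp by (simp add: setting2_def)
  define c where "c = integral\<^sup>L (fst \<eta>) S2.g - integral\<^sup>L (snd \<eta>) S2.g"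
  have of: "obj h Q \<alpha> \<eta> X = S2.AA \<alpha> Q X - 2 * S2.BB \<alpha> Q X + c" for X
    using S2.obj_formula[of Q \<alpha> X] unfolding prod.collapse c_def .
  define S where "S = {q. q < Q \<and> \<alpha> q > 0}"
  have Ssub: "S \<subseteq> {..<Q}" and Sfin: "finite S" unfolding S_def by auto
  have zero_out: "\<alpha> q = 0" if "q < Q" "q \<notin> S" for q
    using that apos unfolding S_def by force
  have AA_cong: "S2.AA \<alpha> Q X = S2.AA \<alpha> Q Y" and BB_cong: "S2.BB \<alpha> Q X = S2.BB \<alpha> Q Y"
    if "\<And>q. q \<in> S \<Longrightarrow> X q = Y q" for X Y
  proof -
    have *: "\<alpha> q = 0 \<or> X q = Y q" if "q < Q" for q using that zero_out[of q] \<open>\<And>q. q \<in> S \<Longrightarrow> X q = Y q\<close>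
      by blast
    have **: "\<alpha> q * \<alpha> r * kernel_k h (X q) (X r) = \<alpha> q * \<alpha> r * kernel_k h (Y q) (Y r)"
      if "q < Q" "r < Q" for q r
      using *[OF that(1)] *[OF that(2)] by auto
    show "S2.AA \<alpha> Q X = S2.AA \<alpha> Q Y" unfolding S2.AA_def
      by (intro sum.cong refl) (use ** in auto)
    show "S2.BB \<alpha> Q X = S2.BB \<alpha> Q Y" unfolding S2.BB_def
      by (intro sum.cong refl) (use * in force)
  qed
  show ?thesis
  proof (cases "S = {}")
    case True
    then have "\<alpha> q = 0" if "q < Q" for q using zero_out that by blast
    then have "obj h Q \<alpha> \<eta> Y = c" for Y unfolding of S2.AA_def S2.BB_def by simp
    then show ?thesis by simp
  next
    case False
    define s where "s = (\<Sum>q<Q. \<alpha> q)"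
    obtain q0 where q0: "q0 \<in> S" using False by blast
    have "s \<ge> \<alpha> q0" unfolding s_def
      using q0 Ssub apos by (intro member_le_sum) auto
    then have spos: "s > 0" using q0 unfolding S_def by auto
    define J where "J = card S"
    obtain e where e: "bij_betw e {0..<card S} S" using ex_bij_betw_nat_finite[OF Sfin] by blast
    define \<beta> where "\<beta> j = \<alpha> (e j) / s" for j
    have eS: "e j \<in> S" if "j < J" for j using e that unfolding J_def bij_betw_def by auto
    have J1: "J \<ge> 1" unfolding J_def using False Sfin by (simp add: Suc_le_eq card_gt_0_iff)
    have bpos: "\<forall>j<J. \<beta> j > 0" using eS spos unfolding \<beta>_def S_def by auto
    have bsum: "(\<Sum>j<J. \<beta> j) = 1"
    proof -
      have "(\<Sum>j<J. \<beta> j) = (\<Sum>q<Q. \<alpha> q / s)" unfolding J_def \<beta>_def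
        by (rule reindex[OF e Ssub]) (simp add: zero_out)
      also have "\<dots> = 1" using spos unfolding s_def[symmetric] sum_divide_distrib[symmetric] by simp
      finally show ?thesis .
    qed
    obtain R0 where R0: "\<And>Z. (\<exists>j<J. norm (Z j) \<ge> R0) \<Longrightarrow>
        sqrt (kdist2 (kernel_k h) (\<lambda>f. dirac_int J \<beta> Z f - f 0)) \<ge> 2 * S2.CC / s"
      using mc J1 bpos bsum unfolding measure_coercive_def by blast
    have big: "obj h Q \<alpha> \<eta> X \<ge> c" if X: "q \<in> S" "norm (X q) \<ge> R0" for X q
    proof -
      obtain j where j: "j < J" "e j = q" using e X(1) unfolding J_def bij_betw_def by force
      have di: "dirac_int J \<beta> (\<lambda>j. X (e j)) f = dirac_int Q \<alpha> X f / s" for f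
        unfolding dirac_int_def \<beta>_def J_def sum_divide_distrib
        using reindex[OF e Ssub, of "\<lambda>q. \<alpha> q / s * f (X q)"] zero_out by (simp add: mult_ac)
      have "sqrt (kdist2 (kernel_k h) (\<lambda>f. dirac_int J \<beta> (\<lambda>j. X (e j)) f - f 0)) \<ge> 2 * S2.CC / s"
        using R0[of "\<lambda>j. X (e j)"] j X by auto
      also have "kdist2 (kernel_k h) (\<lambda>f. dirac_int J \<beta> (\<lambda>j. X (e j)) f - f 0) = S2.AA \<alpha> Q X / s^2"
        unfolding di kd[OF cnd spos[THEN less_imp_neq, symmetric]] S2.AA_def ..
      finally have "2 * S2.CC / s \<le> sqrt (S2.AA \<alpha> Q X) / s"
        using spos by (simp add: real_sqrt_divide)
      then have A2: "2 * S2.CC \<le> sqrt (S2.AA \<alpha> Q X)" using spos by (simp add: divide_le_cancel)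
      have A0: "0 \<le> S2.AA \<alpha> Q X" unfolding S2.AA_def by (rule k_pd[OF cnd])
      have "2 * S2.BB \<alpha> Q X \<le> 2 * (sqrt (S2.AA \<alpha> Q X) * S2.CC)" using S2.BB_bound[of \<alpha> Q X] by simp
      also have "\<dots> = sqrt (S2.AA \<alpha> Q X) * (2 * S2.CC)" by simp
      also have "\<dots> \<le> sqrt (S2.AA \<alpha> Q X) * sqrt (S2.AA \<alpha> Q X)"
        by (rule mult_left_mono[OF A2]) (simp add: A0)
      also have "\<dots> = S2.AA \<alpha> Q X" using A0 by simp
      finally show ?thesis unfolding of by simp
    qed
    define R where "R = max R0 1"
    define F where "F q = (if q \<in> S then cball (0::real^'n) R else {0})" for q
    define K where "K = PiE UNIV F"
    have "compactin (product_topology (\<lambda>i. euclidean) UNIV) K"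
      unfolding K_def compactin_PiE F_def by (auto simp: compact_cball)
    then have Kc: "compact K" unfolding euclidean_product_topology by simp
    have X0K: "(\<lambda>_. 0) \<in> K" unfolding K_def F_def R_def by auto
    have cont: "continuous_on UNIV (\<lambda>X. S2.AA \<alpha> Q X - 2 * S2.BB \<alpha> Q X + c)"
      unfolding S2.AA_def S2.BB_def
      by (intro continuous_intros k_comp[OF hc] continuous_on_product_coordinates
           continuous_on_compose2[OF S2.g_cont continuous_on_product_coordinates]) auto
    have "continuous_on K (obj h Q \<alpha> \<eta>)"
      unfolding of by (rule continuous_on_subset[OF cont]) simp
    then obtain Xm where Xm: "Xm \<in> K" "\<And>Y. Y \<in> K \<Longrightarrow> obj h Q \<alpha> \<eta> Xm \<le> obj h Q \<alpha> \<eta> Y"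
      using continuous_attains_inf[OF Kc] X0K by blast
    have kz: "kernel_k h 0 = (\<lambda>_. 0)" by (rule ext) (simp add: k_zero2[OF cnd])
    have o0: "obj h Q \<alpha> \<eta> (\<lambda>_. 0) = c"
      unfolding of S2.AA_def S2.BB_def S2.g_def S2.p.G_def S2.n.G_def
      by (simp add: k_zero1[OF cnd] k_zero2[OF cnd] kz)
    show ?thesis
    proof (intro exI allI)
      fix Y :: "nat \<Rightarrow> real^'n"
      show "obj h Q \<alpha> \<eta> Xm \<le> obj h Q \<alpha> \<eta> Y"
      proof (cases "\<exists>q\<in>S. norm (Y q) \<ge> R0")
        case True
        then obtain q where "q \<in> S" "norm (Y q) \<ge> R0" by blast
        then have "obj h Q \<alpha> \<eta> Y \<ge> c" by (rule big)
        moreover have "obj h Q \<alpha> \<eta> Xm \<le> c" using Xm(2)[OF X0K] o0 by simp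
        ultimately show ?thesis by simp
      next
        case False
        define Y' where "Y' q = (if q \<in> S then Y q else 0)" for q
        have "Y' \<in> K" unfolding K_def F_def Y'_def R_def using False by (auto simp: PiE_iff)
        moreover have "obj h Q \<alpha> \<eta> Y' = obj h Q \<alpha> \<eta> Y"
          unfolding of using AA_cong[of Y' Y] BB_cong[of Y' Y] by (simp add: Y'_def)
        ultimately show ?thesis using Xm(2) by metis
      qed
    qed
  qed
qed


end
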